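(* Let $\mathcal{R}\subseteq\mathbb{R}^{\mathcal{S}\times\mathcal{A}}$ be a nonempty compact, not necessarily $s$-rectangular, reward uncertainty set, and let $C(\mathcal{R})=\bigcap\{\mathcal{R}^{\texttt{s}} : \mathcal{R}^{\texttt{s}} \text{ is } s\text{-rectangular and } \mathcal{R}\subseteq\mathcal{R}^{\texttt{s}}\}$ be the smallest $s$-rectangular set containing $\mathcal{R}$. Then for every stationary policy $\pi\in\Pi$, the robust value function $v^\pi_{C(\mathcal{R})}$ is a fixed point of the robust Bellman evaluation operator $\mathcal{T}^\pi_{\mathcal{R}}$, and the optimal robust value function $v^*_{C(\mathcal{R})}$ is a fixed point of the robust Bellman optimality operator $\mathcal{T}^*_{\mathcal{R}}$.
   Context: Finite MDP: finite state space $\mathcal{S}$, finite action space $\mathcal{A}$, transition kernel $P(\cdot|s,a)\in\Delta_{\mathcal{S}}$, discount factor $\gamma\in[0,1)$. $\Pi$ is the set of stationary randomized policies $\pi:\mathcal{S}\to\Delta_{\mathcal{A}}$, written $\pi_s(a)=\pi(a|s)$. For a reward $R\in\mathbb{R}^{\mathcal{S}\times\mathcal{A}}$ let $R^\pi(s)=\sum_a\pi_s(a)R(s,a)$, $P^\pi(s'|s)=\sum_a\pi_s(a)P(s'|s,a)$, $v^\pi_R=(I-\gamma P^\pi)^{-1}R^\pi$ and $(\mathcal{T}^\pi_R v)(s)=R^\pi(s)+\gamma\sum_{s'}P^\pi(s'|s)v(s')$. A set $\mathcal{R}'\subseteq\mathbb{R}^{\mathcal{S}\times\mathcal{A}}$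 is $s$-rectangular if $\mathcal{R}'=\times_{s\in\mathcal{S}}\mathcal{R}'_s$ with $\mathcal{R}'_s\subseteq\mathbb{R}^{\mathcal{A}}$ (i.e. the rows $R(s,\cdot)$ can be chosen independently across states). Robust Bellman evaluation operator: $(\mathcal{T}^\pi_{\mathcal{R}}v)(s)=\min_{R\in\mathcal{R}}(\mathcal{T}^\pi_R v)(s)$ for each $s$; robust Bellman optimality operator: $(\mathcal{T}^*_{\mathcal{R}}v)(s)=\max_{\pi\in\Pi}(\mathcal{T}^\pi_{\mathcal{R}}v)(s)$. For a compact $s$-rectangular set $\mathcal{R}'$, the robust value function is $v^\pi_{\mathcal{R}'}(s)=\min_{R\in\mathcal{R}'}v^\pi_R(s)$ and the optimal robust value function is $v^*_{\mathcal{R}'}(s)=\max_{\pi\in\Pi}v^\pi_{\mathcal{R}'}(s)$. *)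

theory Defs
  imports "HOL-Analysis.Analysis"
begin

text \<open>A reward R is a matrix
  real^'a^'s with R$s$a = R(s,a); a policy pol is real^'a^'s with pol$s$a = pol(a|s);
  the transition kernel is P :: 's => 'a => real^'s with (P s a)$s' = P(s'|s,a).\<close>

definition stochastic_kernel :: "('s::finite \<Rightarrow> 'a::finite \<Rightarrow> real^'s) \<Rightarrow> bool" where
  "stochastic_kernel P \<longleftrightarrow> (\<forall>s a. (\<forall>s'. P s a $ s' \<ge> 0) \<and> (\<Sum>s'\<in>UNIV. P s a $ s') = 1)"

definition policies :: "(real^'a::finite^'s::finite) set" where
  "policies = {pol. (\<forall>s a. pol $ s $ a \<ge> 0) \<and> (\<forall>s. (\<Sum>a\<in>UNIV. pol $ s $ a) = 1)}"

definition Rpol :: "real^'a::finite^'s::finite \<Rightarrow> real^'a^'s \<Rightarrow> real^'s" where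
  "Rpol pol R = (\<chi> s. \<Sum>a\<in>UNIV. pol $ s $ a * R $ s $ a)"

definition Ppol :: "('s::finite \<Rightarrow> 'a::finite \<Rightarrow> real^'s) \<Rightarrow> real^'a^'s \<Rightarrow> real^'s^'s" where
  "Ppol P pol = (\<chi> s s'. \<Sum>a\<in>UNIV. pol $ s $ a * P s a $ s')"

definition vpol :: "('s::finite \<Rightarrow> 'a::finite \<Rightarrow> real^'s) \<Rightarrow> real \<Rightarrow> real^'a^'s \<Rightarrow> real^'a^'s \<Rightarrow> real^'s" where
  "vpol P \<gamma> pol R = matrix_inv (mat 1 - \<gamma> *\<^sub>R Ppol P pol) *v Rpol pol R"

definition Tpol :: "('s::finite \<Rightarrow> 'a::finite \<Rightarrow> real^'s) \<Rightarrow> real \<Rightarrow> real^'a^'s \<Rightarrow> real^'a^'s \<Rightarrow> real^'s \<Rightarrow> real^'s" where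
  "Tpol P \<gamma> pol R v = Rpol pol R + \<gamma> *\<^sub>R (Ppol P pol *v v)"

definition Trob :: "('s::finite \<Rightarrow> 'a::finite \<Rightarrow> real^'s) \<Rightarrow> real \<Rightarrow> (real^'a^'s) set \<Rightarrow> real^'a^'s \<Rightarrow> real^'s \<Rightarrow> real^'s" where
  "Trob P \<gamma> RR pol v = (\<chi> s. INF R\<in>RR. Tpol P \<gamma> pol R v $ s)"

definition Topt :: "('s::finite \<Rightarrow> 'a::finite \<Rightarrow> real^'s) \<Rightarrow> real \<Rightarrow> (real^'a^'s) set \<Rightarrow> real^'s \<Rightarrow> real^'s" where
  "Topt P \<gamma> RR v = (\<chi> s. SUP pol\<in>policies. Trob P \<gamma> RR pol v $ s)"

definition s_rectangular :: "(real^'a::finite^'s::finite) set \<Rightarrow> bool" where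
  "s_rectangular RR \<longleftrightarrow> (\<exists>Rs :: 's \<Rightarrow> (real^'a) set. RR = {R. \<forall>s. R $ s \<in> Rs s})"

definition rect_hull :: "(real^'a::finite^'s::finite) set \<Rightarrow> (real^'a^'s) set" where
  "rect_hull RR = \<Inter> {RS. s_rectangular RS \<and> RR \<subseteq> RS}"

definition vrob :: "('s::finite \<Rightarrow> 'a::finite \<Rightarrow> real^'s) \<Rightarrow> real \<Rightarrow> (real^'a^'s) set \<Rightarrow> real^'a^'s \<Rightarrow> real^'s" where
  "vrob P \<gamma> RR pol = (\<chi> s. INF R\<in>RR. vpol P \<gamma> pol R $ s)"

definition vopt :: "('s::finite \<Rightarrow> 'a::finite \<Rightarrow> real^'s) \<Rightarrow> real \<Rightarrow> (real^'a^'s) set \<Rightarrow> real^'s" where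
  "vopt P \<gamma> RR = (\<chi> s. SUP pol\<in>policies. vrob P \<gamma> RR pol $ s)"

end

theory Submission
  imports Defs
begin

definition rowstoch :: "real^'s::finite^'s \<Rightarrow> bool" where
  "rowstoch Q \<longleftrightarrow> (\<forall>s s'. Q $ s $ s' \<ge> 0) \<and> (\<forall>s. (\<Sum>s'\<in>UNIV. Q $ s $ s') = 1)"

lemma Ppol_rowstoch:
  assumes "stochastic_kernel P" "pol \<in> policies"
  shows "rowstoch (Ppol P pol)"
proof -
  have "(\<Sum>s'\<in>UNIV. Ppol P pol $ s $ s') = 1" for s
  proof -
    have "(\<Sum>s'\<in>UNIV. Ppol P pol $ s $ s') = (\<Sum>a\<in>UNIV. pol $ s $ a * (\<Sum>s'\<in>UNIV. P s a $ s'))"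
      unfolding Ppol_def by (simp add: sum_distrib_left) (rule sum.swap)
    also have "\<dots> = 1" using assms unfolding stochastic_kernel_def policies_def by simp
    finally show ?thesis .
  qed
  moreover have "Ppol P pol $ s $ s' \<ge> 0" for s s'
    using assms unfolding stochastic_kernel_def policies_def Ppol_def
    by (simp add: sum_nonneg)
  ultimately show ?thesis unfolding rowstoch_def by blast
qed

lemma rowstoch_lower:
  assumes "rowstoch Q" "\<forall>s. d $ s \<ge> c"
  shows "(Q *v d) $ s \<ge> c"
proof -
  have "(Q *v d) $ s = (\<Sum>s'\<in>UNIV. Q $ s $ s' * d $ s')" by (simp add: matrix_vector_mult_def)
  also have "\<dots> \<ge> (\<Sum>s'\<in>UNIV. Q $ s $ s' * c)"
    using assms by (intro sum_mono) (simp add: rowstoch_def mult_left_mono)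
  also have "(\<Sum>s'\<in>UNIV. Q $ s $ s' * c) = c"
    using assms by (simp add: rowstoch_def sum_distrib_right[symmetric])
  finally show ?thesis .
qed

lemma rowstoch_mono:
  assumes "rowstoch Q" "\<forall>s. d $ s \<le> d' $ s"
  shows "(Q *v d) $ s \<le> (Q *v d') $ s"
proof -
  have "(Q *v (d' - d)) $ s \<ge> 0" using rowstoch_lower[OF assms(1), where d="d' - d" and c=0] assms(2) by simp
  thus ?thesis by (simp add: matrix_vector_mult_diff_distrib)
qed

lemma min_principle:
  fixes \<gamma> e :: real
  assumes "rowstoch Q" "0 \<le> \<gamma>" "\<gamma> < 1" "\<forall>s. d $ s \<ge> - e + \<gamma> * (Q *v d) $ s"
  shows "d $ s \<ge> - e / (1 - \<gamma>)"
proof -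
  define m where "m = Min (range (\<lambda>s. d $ s))"
  have fin: "finite (range (\<lambda>s. d $ s))" by simp
  have m_le: "m \<le> d $ t" for t unfolding m_def by (rule Min_le[OF fin]) simp
  have "m \<in> range (\<lambda>s. d $ s)" unfolding m_def by (rule Min_in[OF fin]) simp
  then obtain s0 where s0: "d $ s0 = m" by auto
  have "(Q *v d) $ s0 \<ge> m" using rowstoch_lower[OF assms(1)] m_le by blast
  hence "\<gamma> * (Q *v d) $ s0 \<ge> \<gamma> * m" using assms(2) by (simp add: mult_left_mono)
  moreover have "d $ s0 \<ge> - e + \<gamma> * (Q *v d) $ s0" using assms(4) by blast
  ultimately have "m \<ge> - e + \<gamma> * m" using s0 by linarith
  hence "(1 - \<gamma>) * m \<ge> - e" by (simp add: algebra_simps)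
  hence "m \<ge> - e / (1 - \<gamma>)" using assms(3) by (simp add: field_simps)
  thus ?thesis using m_le[of s] by simp
qed

lemma invertible_M:
  fixes \<gamma> :: real
  assumes "rowstoch Q" "0 \<le> \<gamma>" "\<gamma> < 1"
  shows "invertible (mat 1 - \<gamma> *\<^sub>R Q)"
proof -
  have "x = 0" if "(mat 1 - \<gamma> *\<^sub>R Q) *v x = 0" for x :: "real^'a"
  proof -
    have eq: "x = \<gamma> *\<^sub>R (Q *v x)"
      using that by (simp add: matrix_vector_mult_diff_rdistrib scaleR_matrix_vector_assoc[symmetric])
    have c: "x $ s = \<gamma> * (Q *v x) $ s" for s
      using arg_cong[where f="\<lambda>v. v $ s", OF eq] by simp
    have "\<forall>s. x $ s \<ge> - 0 + \<gamma> * (Q *v x) $ s" using c by simp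
    hence a: "x $ s \<ge> 0" for s using min_principle[OF assms, where d=x and e=0] by simp
    have neg: "(Q *v (-x)) $ s = - (Q *v x) $ s" for s
      by (simp add: matrix_vector_mult_def sum_negf)
    have "\<forall>s. (-x) $ s \<ge> - 0 + \<gamma> * (Q *v (-x)) $ s" using c neg by simp
    hence b: "(-x) $ s \<ge> 0" for s using min_principle[OF assms, where d="-x" and e=0] by simp
    have "x $ s = 0" for s using a[of s] b[of s] by simp
    thus ?thesis by (simp add: vec_eq_iff)
  qed
  hence "\<exists>B. B ** (mat 1 - \<gamma> *\<^sub>R Q) = mat 1"
    unfolding matrix_left_invertible_ker by blast
  thus ?thesis unfolding invertible_left_inverse .
qed

lemma rowstoch_upper:
  assumes "rowstoch Q" "\<forall>s. d $ s \<le> c"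
  shows "(Q *v d) $ s \<le> c"
proof -
  have "(Q *v d) $ s = (\<Sum>s'\<in>UNIV. Q $ s $ s' * d $ s')" by (simp add: matrix_vector_mult_def)
  also have "\<dots> \<le> (\<Sum>s'\<in>UNIV. Q $ s $ s' * c)"
    using assms by (intro sum_mono) (simp add: rowstoch_def mult_left_mono)
  also have "(\<Sum>s'\<in>UNIV. Q $ s $ s' * c) = c"
    using assms by (simp add: rowstoch_def sum_distrib_right[symmetric])
  finally show ?thesis .
qed

lemma Qdiff:
  fixes Q :: "real^'n::finite^'m::finite"
  shows "(Q *v (x - y)) $ s = (Q *v x) $ s - (Q *v y) $ s"
  by (simp add: matrix_vector_mult_def sum_subtractf right_diff_distrib)

lemma Rpol_row: "pol $ s = pol' $ s \<Longrightarrow> R $ s = R' $ s \<Longrightarrow> Rpol pol R $ s = Rpol pol' R' $ s"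
  by (simp add: Rpol_def)

lemma Ppol_row: "pol $ s = pol' $ s \<Longrightarrow> (Ppol P pol *v v) $ s = (Ppol P pol' *v v) $ s"
  by (simp add: Ppol_def matrix_vector_mult_def)

lemma Tpol_row: "pol $ s = pol' $ s \<Longrightarrow> R $ s = R' $ s \<Longrightarrow> Tpol P \<gamma> pol R v $ s = Tpol P \<gamma> pol' R' v $ s"
  using Rpol_row[of pol s pol' R R'] Ppol_row[of pol s pol' P v] by (simp add: Tpol_def)

lemma vpol_fix:
  fixes \<gamma> :: real
  assumes "stochastic_kernel P" "0 \<le> \<gamma>" "\<gamma> < 1" "pol \<in> policies"
  shows "vpol P \<gamma> pol R $ s = Rpol pol R $ s + \<gamma> * (Ppol P pol *v vpol P \<gamma> pol R) $ s"
proof -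
  define M where "M = mat 1 - \<gamma> *\<^sub>R Ppol P pol"
  have inv: "invertible M" unfolding M_def by (rule invertible_M[OF Ppol_rowstoch[OF assms(1,4)] assms(2,3)])
  have "M ** matrix_inv M = mat 1 \<and> matrix_inv M ** M = mat 1"
    using inv unfolding invertible_def matrix_inv_def by (rule someI_ex)
  hence "M *v vpol P \<gamma> pol R = Rpol pol R"
    unfolding vpol_def M_def[symmetric] by (simp add: matrix_vector_mul_assoc)
  hence "vpol P \<gamma> pol R - \<gamma> *\<^sub>R (Ppol P pol *v vpol P \<gamma> pol R) = Rpol pol R"
    unfolding M_def by (simp add: matrix_vector_mult_diff_rdistrib scaleR_matrix_vector_assoc)
  from arg_cong[where f="\<lambda>v. v $ s", OF this] show ?thesis by simp
qed

context
  fixes P :: "'s::finite \<Rightarrow> 'a::finite \<Rightarrow> real^'s"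
    and \<gamma> :: real
    and RR :: "(real^'a^'s) set"
  assumes sk: "stochastic_kernel P"
    and g0: "0 \<le> \<gamma>" and g1: "\<gamma> < 1"
    and ne: "RR \<noteq> {}" and cp: "compact RR"
begin

lemma ex_min: "\<exists>R\<in>RR. \<forall>R'\<in>RR. Rpol pol R $ s \<le> Rpol pol R' $ s"
proof (rule continuous_attains_inf[OF cp ne])
  show "continuous_on RR (\<lambda>R. Rpol pol R $ s)"
    unfolding Rpol_def by simp (intro continuous_intros)
qed

definition Rm :: "real^'a^'s \<Rightarrow> 's \<Rightarrow> real^'a^'s" where
  "Rm pol s = (SOME R. R \<in> RR \<and> (\<forall>R'\<in>RR. Rpol pol R $ s \<le> Rpol pol R' $ s))"

lemma Rm: "Rm pol s \<in> RR" "R' \<in> RR \<Longrightarrow> Rpol pol (Rm pol s) $ s \<le> Rpol pol R' $ s"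
proof -
  have "Rm pol s \<in> RR \<and> (\<forall>R'\<in>RR. Rpol pol (Rm pol s) $ s \<le> Rpol pol R' $ s)"
    using ex_min[of pol s] unfolding Rm_def Bex_def by (rule someI_ex)
  thus "Rm pol s \<in> RR" "R' \<in> RR \<Longrightarrow> Rpol pol (Rm pol s) $ s \<le> Rpol pol R' $ s" by auto
qed

definition Rstar :: "real^'a^'s \<Rightarrow> real^'a^'s" where
  "Rstar pol = (\<chi> s. Rm pol s $ s)"

definition W :: "real^'a^'s \<Rightarrow> real^'s" where
  "W pol = vpol P \<gamma> pol (Rstar pol)"

lemma rmin_eq: "Rpol pol (Rstar pol) $ s = Rpol pol (Rm pol s) $ s"
  by (rule Rpol_row) (simp_all add: Rstar_def)

lemma Rstar_in: "Rstar pol \<in> rect_hull RR"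
proof -
  have "Rstar pol \<in> RS" if rs: "s_rectangular RS" and sub: "RR \<subseteq> RS" for RS
  proof -
    obtain Rs where RS: "RS = {R. \<forall>s. R $ s \<in> Rs s}" using rs unfolding s_rectangular_def by blast
    have "Rm pol s $ s \<in> Rs s" for s using Rm(1)[of pol s] sub unfolding RS by blast
    hence "\<forall>s. Rstar pol $ s \<in> Rs s" by (simp add: Rstar_def)
    thus ?thesis unfolding RS by blast
  qed
  thus ?thesis unfolding rect_hull_def by blast
qed

lemma hull_rows: "R \<in> rect_hull RR \<Longrightarrow> \<exists>R'\<in>RR. R $ s = R' $ s"
proof -
  assume R: "R \<in> rect_hull RR"
  have "s_rectangular {R. \<forall>s. R $ s \<in> (\<lambda>R. R $ s) ` RR}"
    unfolding s_rectangular_def by (rule exI[where x="\<lambda>s. (\<lambda>R. R $ s) ` RR"]) (rule refl)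
  moreover have "RR \<subseteq> {R. \<forall>s. R $ s \<in> (\<lambda>R. R $ s) ` RR}" by blast
  ultimately have "R \<in> {R. \<forall>s. R $ s \<in> (\<lambda>R. R $ s) ` RR}"
    using R unfolding rect_hull_def by blast
  thus ?thesis by auto
qed

lemma RR_hull: "RR \<subseteq> rect_hull RR"
  unfolding rect_hull_def by blast

lemma rmin_le: "R \<in> rect_hull RR \<Longrightarrow> Rpol pol (Rstar pol) $ s \<le> Rpol pol R $ s"
proof -
  assume "R \<in> rect_hull RR"
  then obtain R' where R': "R' \<in> RR" "R $ s = R' $ s" using hull_rows by blast
  have "Rpol pol R $ s = Rpol pol R' $ s" by (rule Rpol_row) (simp_all add: R')
  thus ?thesis using rmin_eq Rm(2)[OF R'(1)] by simp
qed

lemma W_fix: "pol \<in> policies \<Longrightarrow> W pol $ s = Rpol pol (Rstar pol) $ s + \<gamma> * (Ppol P pol *v W pol) $ s"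
  unfolding W_def by (rule vpol_fix[OF sk g0 g1])

lemma W_le: 
  assumes pol: "pol \<in> policies" and R: "R \<in> rect_hull RR"
  shows "W pol $ s \<le> vpol P \<gamma> pol R $ s"
proof -
  define d where "d = vpol P \<gamma> pol R - W pol"
  have "\<forall>t. d $ t \<ge> - 0 + \<gamma> * (Ppol P pol *v d) $ t"
  proof
    fix t
    have "d $ t = (Rpol pol R $ t - Rpol pol (Rstar pol) $ t) + \<gamma> * (Ppol P pol *v d) $ t"
      unfolding d_def using W_fix[OF pol, of t] vpol_fix[OF sk g0 g1 pol, of R t]
      by (simp add: Qdiff algebra_simps)
    thus "d $ t \<ge> - 0 + \<gamma> * (Ppol P pol *v d) $ t" using rmin_le[OF R, of pol t] by simp
  qed
  from min_principle[OF Ppol_rowstoch[OF sk pol] g0 g1 this] show ?thesis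
    by (simp add: d_def)
qed

lemma vrob_W:
  assumes pol: "pol \<in> policies"
  shows "vrob P \<gamma> (rect_hull RR) pol = W pol"
proof -
  have "vrob P \<gamma> (rect_hull RR) pol $ s = W pol $ s" for s
  proof -
    have "(INF R\<in>rect_hull RR. vpol P \<gamma> pol R $ s) = vpol P \<gamma> pol (Rstar pol) $ s"
      by (rule cInf_eq_minimum) (use Rstar_in W_le[OF pol] in \<open>auto simp: W_def\<close>)
    thus ?thesis by (simp add: vrob_def W_def)
  qed
  thus ?thesis by (simp add: vec_eq_iff)
qed

lemma Trob_eq: "Trob P \<gamma> RR pol v $ s = Rpol pol (Rstar pol) $ s + \<gamma> * (Ppol P pol *v v) $ s"
proof -
  have "(INF R\<in>RR. Tpol P \<gamma> pol R v $ s) = Tpol P \<gamma> pol (Rm pol s) v $ s"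
    by (rule cInf_eq_minimum) (use Rm(1)[of pol s] Rm(2)[of _ pol s] in \<open>auto simp: Tpol_def\<close>)
  thus ?thesis by (simp add: Trob_def Tpol_def rmin_eq)
qed

lemma part1: "pol \<in> policies \<Longrightarrow> Trob P \<gamma> RR pol (vrob P \<gamma> (rect_hull RR) pol) = vrob P \<gamma> (rect_hull RR) pol"
  by (simp add: vrob_W vec_eq_iff Trob_eq W_fix)

lemma policies_ne: "(policies :: (real^'a^'s) set) \<noteq> {}"
proof -
  have "((\<chi> s a. 1 / real CARD('a)) :: real^'a^'s) \<in> policies"
    unfolding policies_def by simp
  thus ?thesis by blast
qed

definition B :: "real^'a^'s \<Rightarrow> real" where
  "B R0 = (\<Sum>t\<in>UNIV. \<Sum>a\<in>UNIV. \<bar>R0 $ t $ a\<bar>)"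

lemma entry_le_B: "R0 $ t $ a \<le> B R0"
proof -
  have "R0 $ t $ a \<le> \<bar>R0 $ t $ a\<bar>" by simp
  also have "\<dots> \<le> (\<Sum>a\<in>UNIV. \<bar>R0 $ t $ a\<bar>)"
    by (rule member_le_sum) auto
  also have "\<dots> \<le> B R0" unfolding B_def
    by (rule member_le_sum[where f="\<lambda>t. \<Sum>a\<in>UNIV. \<bar>R0 $ t $ a\<bar>"]) (auto intro: sum_nonneg)
  finally show ?thesis .
qed

lemma Rpol_le_B:
  assumes pol: "pol \<in> policies"
  shows "Rpol pol R0 $ t \<le> B R0"
proof -
  have "Rpol pol R0 $ t = (\<Sum>a\<in>UNIV. pol $ t $ a * R0 $ t $ a)" by (simp add: Rpol_def)
  also have "\<dots> \<le> (\<Sum>a\<in>UNIV. pol $ t $ a * B R0)"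
    using pol entry_le_B by (intro sum_mono mult_left_mono) (auto simp: policies_def)
  also have "\<dots> = B R0" using pol by (simp add: policies_def sum_distrib_right[symmetric])
  finally show ?thesis .
qed

lemma vpol_bound:
  assumes pol: "pol \<in> policies"
  shows "vpol P \<gamma> pol R0 $ s \<le> B R0 / (1 - \<gamma>)"
proof -
  define v where "v = vpol P \<gamma> pol R0"
  have neg: "(Ppol P pol *v (-v)) $ t = - (Ppol P pol *v v) $ t" for t
    by (simp add: matrix_vector_mult_def sum_negf)
  have "\<forall>t. (-v) $ t \<ge> - B R0 + \<gamma> * (Ppol P pol *v (-v)) $ t"
  proof
    fix t
    show "(-v) $ t \<ge> - B R0 + \<gamma> * (Ppol P pol *v (-v)) $ t"
      using vpol_fix[OF sk g0 g1 pol, of R0 t] Rpol_le_B[OF pol, of R0 t] neg[of t]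
      unfolding v_def by simp
  qed
  from min_principle[OF Ppol_rowstoch[OF sk pol] g0 g1 this, of s] show ?thesis
    unfolding v_def by simp
qed

lemma bddW: "bdd_above ((\<lambda>pol. W pol $ s) ` policies)"
proof -
  obtain R0 where R0: "R0 \<in> RR" using ne by blast
  have "W pol $ s \<le> B R0 / (1 - \<gamma>)" if "pol \<in> policies" for pol
    using W_le[OF that, of R0 s] RR_hull R0 vpol_bound[OF that, of R0 s] by auto
  thus ?thesis by (intro bdd_aboveI2) 
qed

lemma bddT: "bdd_above ((\<lambda>pol. Trob P \<gamma> RR pol v $ s) ` policies)"
proof -
  obtain R0 where R0: "R0 \<in> RR" using ne by blast
  define c where "c = (\<Sum>t\<in>UNIV. \<bar>v $ t\<bar>)"
  have vc: "\<forall>t. v $ t \<le> c"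
  proof
    fix t
    have "v $ t \<le> \<bar>v $ t\<bar>" by simp
    also have "\<dots> \<le> c" unfolding c_def by (rule member_le_sum) auto
    finally show "v $ t \<le> c" .
  qed
  have "Trob P \<gamma> RR pol v $ s \<le> B R0 + \<gamma> * c" if pol: "pol \<in> policies" for pol
  proof -
    have "Rpol pol (Rstar pol) $ s \<le> B R0"
      using rmin_le[of R0 pol s] RR_hull R0 Rpol_le_B[OF pol, of R0 s] by auto
    moreover have "\<gamma> * (Ppol P pol *v v) $ s \<le> \<gamma> * c"
      using rowstoch_upper[OF Ppol_rowstoch[OF sk pol] vc] g0 by (simp add: mult_left_mono)
    ultimately show ?thesis by (simp add: Trob_eq)
  qed
  thus ?thesis by (intro bdd_aboveI2) 
qed

lemma Trob_row: "pol $ t = pol' $ t \<Longrightarrow> Trob P \<gamma> RR pol v $ t = Trob P \<gamma> RR pol' v $ t"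
  unfolding Trob_def using Tpol_row[of pol t pol'] by simp

lemma part2: "Topt P \<gamma> RR (vopt P \<gamma> (rect_hull RR)) = vopt P \<gamma> (rect_hull RR)"
proof -
  define V where "V = vopt P \<gamma> (rect_hull RR)"
  define U where "U = Topt P \<gamma> RR V"
  have Vs: "V $ t = (SUP pol\<in>policies. W pol $ t)" for t
    unfolding V_def vopt_def by (simp add: vrob_W)
  have WV: "W pol $ t \<le> V $ t" if "pol \<in> policies" for pol t
    unfolding Vs by (rule cSUP_upper[OF that bddW])
  have Us: "U $ t = (SUP pol\<in>policies. Trob P \<gamma> RR pol V $ t)" for t
    unfolding U_def Topt_def by simp
  have TU: "Trob P \<gamma> RR pol V $ t \<le> U $ t" if "pol \<in> policies" for pol t
    unfolding Us by (rule cSUP_upper[OF that bddT])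
  have ge: "V $ t \<le> U $ t" for t
    unfolding Vs
  proof (rule cSUP_least[OF policies_ne])
    fix pol :: "real^'a^'s" assume pol: "pol \<in> policies"
    have "(Ppol P pol *v W pol) $ t \<le> (Ppol P pol *v V) $ t"
      using rowstoch_mono[OF Ppol_rowstoch[OF sk pol]] WV[OF pol] by blast
    hence "W pol $ t \<le> Trob P \<gamma> RR pol V $ t"
      using W_fix[OF pol, of t] g0 by (simp add: Trob_eq mult_left_mono)
    thus "W pol $ t \<le> U $ t" using TU[OF pol, of t] by linarith
  qed
  have le: "U $ s \<le> V $ s" for s
  proof (rule field_le_epsilon)
    fix e :: real assume e: "0 < e"
    define \<epsilon> where "\<epsilon> = e * (1 - \<gamma>)"
    have \<epsilon>: "0 < \<epsilon>" using e g1 unfolding \<epsilon>_def by simp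
    have "\<forall>t. \<exists>pol. pol \<in> policies \<and> U $ t - \<epsilon> < Trob P \<gamma> RR pol V $ t"
    proof
      fix t
      have "U $ t - \<epsilon> < (SUP pol\<in>policies. Trob P \<gamma> RR pol V $ t)" using \<epsilon> Us[of t] by simp
      thus "\<exists>pol. pol \<in> policies \<and> U $ t - \<epsilon> < Trob P \<gamma> RR pol V $ t"
        using less_cSUP_iff[OF policies_ne bddT] by blast
    qed
    from choice[OF this] obtain pf where pf: "\<And>t. pf t \<in> policies" "\<And>t. U $ t - \<epsilon> < Trob P \<gamma> RR (pf t) V $ t"
      by blast
    define pol' :: "real^'a^'s" where "pol' = (\<chi> t. pf t $ t)"
    have pol': "pol' \<in> policies"
    proof -
      have "\<forall>a. pf t $ t $ a \<ge> 0" "(\<Sum>a\<in>UNIV. pf t $ t $ a) = 1" for t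
        using pf(1)[of t] unfolding policies_def by auto
      thus ?thesis unfolding policies_def pol'_def by simp
    qed
    have T': "U $ t - \<epsilon> < Rpol pol' (Rstar pol') $ t + \<gamma> * (Ppol P pol' *v V) $ t" for t
      using pf(2)[of t] Trob_row[of pol' t "pf t" V] Trob_eq[of pol' V t] by (simp add: pol'_def)
    define d where "d = W pol' - V"
    have "\<forall>t. d $ t \<ge> - \<epsilon> + \<gamma> * (Ppol P pol' *v d) $ t"
    proof
      fix t
      show "d $ t \<ge> - \<epsilon> + \<gamma> * (Ppol P pol' *v d) $ t"
        using W_fix[OF pol', of t] T'[of t] ge[of t] unfolding d_def
        by (simp add: Qdiff algebra_simps)
    qed
    from min_principle[OF Ppol_rowstoch[OF sk pol'] g0 g1 this]
    have "\<forall>t. d $ t \<ge> - \<epsilon> / (1 - \<gamma>)" by blast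
    from rowstoch_lower[OF Ppol_rowstoch[OF sk pol'] this]
    have "(Ppol P pol' *v d) $ s \<ge> - \<epsilon> / (1 - \<gamma>)" .
    hence gd: "\<gamma> * (Ppol P pol' *v d) $ s \<ge> \<gamma> * (- \<epsilon> / (1 - \<gamma>))" using g0 by (intro mult_left_mono)
    have "W pol' $ s = Rpol pol' (Rstar pol') $ s + \<gamma> * (Ppol P pol' *v V) $ s + \<gamma> * (Ppol P pol' *v d) $ s"
      using W_fix[OF pol', of s] unfolding d_def by (simp add: Qdiff algebra_simps)
    hence "W pol' $ s \<ge> U $ s - \<epsilon> + \<gamma> * (- \<epsilon> / (1 - \<gamma>))" using T'[of s] gd by linarith
    moreover have "\<epsilon> - \<gamma> * (- \<epsilon> / (1 - \<gamma>)) = e" using g1 unfolding \<epsilon>_def by (simp add: field_simps)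
    ultimately show "U $ s \<le> V $ s + e" using WV[OF pol', of s] by linarith
  qed
  show ?thesis using ge le unfolding U_def V_def by (simp add: vec_eq_iff order_antisym)
qed

end

theorem proposition1:
  fixes P :: "'s::finite \<Rightarrow> 'a::finite \<Rightarrow> real^'s"
    and \<gamma> :: real
    and RR :: "(real^'a^'s) set"
  assumes "stochastic_kernel P"
    and "0 \<le> \<gamma>" and "\<gamma> < 1"
    and "RR \<noteq> {}" and "compact RR"
  shows "(\<forall>pol\<in>policies. Trob P \<gamma> RR pol (vrob P \<gamma> (rect_hull RR) pol) = vrob P \<gamma> (rect_hull RR) pol)
         \<and> Topt P \<gamma> RR (vopt P \<gamma> (rect_hull RR)) = vopt P \<gamma> (rect_hull RR)"
  using part1[OF assms] part2[OF assms] by blast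

end
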